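(* Let $B=(B,+,0)$ be a unitary magma, let $(X,\varphi)$ and $(X',\varphi')$ be $B$-actions, and let $f\colon X\to X'$ be a morphism of unitary magmas (with respect to the structures $x+x'=\varphi(x,0,x',0)$ on $X$ and $y+y'=\varphi'(y,0,y',0)$ on $X'$). If $f$ is an isomorphism and a $B$-morphism, then there exists a unique isomorphism of unitary magmas $g\colon X\rtimes_\varphi B\to X'\rtimes_{\varphi'}B$ such that $\pi_{X'}g=f\pi_X$, $g(x,0)=(f(x),0)$ for all $x\in X$, and $g(0,b)=(0,b)$ for all $b\in B$, where $\pi_X,\pi_{X'}$ denote the first-coordinate projections.
   Context: A unitary magma is a set with a binary operation $+$ and an element $0$ with $b+0=b=0+b$ for all $b$; morphisms preserve $+$ and $0$. A $B$-action is a pair $(X,\varphi)$ with $X$ a set and $\varphi\colon X\times B\times X\times B\to X$ a map such that: (1) there is an element $0\in X$ with $\varphi(x,0,0,0)=x=\varphi(0,0,x,0)$ for all $x\in X$; (2) $\varphi(x,b,0,0)=\varphi(x,0,0,b)=\varphi(0,0,x,b)$ for all $x\in X,b\in B$; (3) $\varphi(0,b,0,b')=0$ for all $b,b'\in B$; (4) writing $\varphi_{00}(x,b)=\varphi(x,0,0,b)$, for all $x,x'\in X$, $b,b'\in B$: $\varphi(x,b,x',b')=\varphi_{00}\big(\varphi(\varphi_{00}(x,b),b,\varphi_{00}(x',b'),b'),\,b+b'\big)$. The semidirect product $X\rtimes_\varphi B$ is the set $\{(x,b)\in X\times B\mid\varphi(x,0,0,b)=x\}$ with operation $(x,b)+(x',b')=(\varphi(x,b,x',b'),b+b')$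 and neutral element $(0,0)$. A $B$-morphism from $(X,\varphi)$ to $(X',\varphi')$ is a map $f\colon X\to X'$ with $f(0)=0$ and $\varphi'(f(x),b,f(x'),b')=f(\varphi(x,b,x',b'))$ for all $x,x'\in X$, $b,b'\in B$. *)

theory Defs
  imports Main
begin

definition unitary_magma :: "'a set \<Rightarrow> ('a \<Rightarrow> 'a \<Rightarrow> 'a) \<Rightarrow> 'a \<Rightarrow> bool" where
  "unitary_magma S add z \<longleftrightarrow> z \<in> S \<and> (\<forall>a\<in>S. \<forall>b\<in>S. add a b \<in> S)
     \<and> (\<forall>a\<in>S. add a z = a \<and> add z a = a)"

definition magma_hom ::
  "'a set \<Rightarrow> ('a \<Rightarrow> 'a \<Rightarrow> 'a) \<Rightarrow> 'a \<Rightarrow> 'c set \<Rightarrow> ('c \<Rightarrow> 'c \<Rightarrow> 'c) \<Rightarrow> 'c \<Rightarrow> ('a \<Rightarrow> 'c) \<Rightarrow> bool" where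
  "magma_hom S add z S' add' z' g \<longleftrightarrow> (\<forall>a\<in>S. g a \<in> S')
     \<and> (\<forall>a\<in>S. \<forall>b\<in>S. g (add a b) = add' (g a) (g b)) \<and> g z = z'"

definition magma_iso ::
  "'a set \<Rightarrow> ('a \<Rightarrow> 'a \<Rightarrow> 'a) \<Rightarrow> 'a \<Rightarrow> 'c set \<Rightarrow> ('c \<Rightarrow> 'c \<Rightarrow> 'c) \<Rightarrow> 'c \<Rightarrow> ('a \<Rightarrow> 'c) \<Rightarrow> bool" where
  "magma_iso S add z S' add' z' g \<longleftrightarrow> magma_hom S add z S' add' z' g \<and> bij_betw g S S'"

text \<open>B-action (X, phi), B = (UNIV, addB, zB), X = UNIV of type 'x, with distinguished element zX
  (the element 0 of X from condition (1)).\<close>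
definition B_action :: "('b \<Rightarrow> 'b \<Rightarrow> 'b) \<Rightarrow> 'b \<Rightarrow> 'x \<Rightarrow> ('x \<Rightarrow> 'b \<Rightarrow> 'x \<Rightarrow> 'b \<Rightarrow> 'x) \<Rightarrow> bool" where
  "B_action addB zB zX phi \<longleftrightarrow>
     (\<forall>x. phi x zB zX zB = x \<and> phi zX zB x zB = x)
   \<and> (\<forall>x b. phi x b zX zB = phi x zB zX b \<and> phi x zB zX b = phi zX zB x b)
   \<and> (\<forall>b b'. phi zX b zX b' = zX)
   \<and> (\<forall>x x' b b'. phi x b x' b' =
        phi (phi (phi x zB zX b) b (phi x' zB zX b') b') zB zX (addB b b'))"

definition sdp_carrier :: "'b \<Rightarrow> 'x \<Rightarrow> ('x \<Rightarrow> 'b \<Rightarrow> 'x \<Rightarrow> 'b \<Rightarrow> 'x) \<Rightarrow> ('x \<times> 'b) set" where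
  "sdp_carrier zB zX phi = {(x, b). phi x zB zX b = x}"

definition sdp_add :: "('b \<Rightarrow> 'b \<Rightarrow> 'b) \<Rightarrow> ('x \<Rightarrow> 'b \<Rightarrow> 'x \<Rightarrow> 'b \<Rightarrow> 'x) \<Rightarrow> ('x \<times> 'b) \<Rightarrow> ('x \<times> 'b) \<Rightarrow> ('x \<times> 'b)" where
  "sdp_add addB phi p q = (phi (fst p) (snd p) (fst q) (snd q), addB (snd p) (snd q))"

definition B_morphism :: "'x \<Rightarrow> ('x \<Rightarrow> 'b \<Rightarrow> 'x \<Rightarrow> 'b \<Rightarrow> 'x) \<Rightarrow> 'y \<Rightarrow> ('y \<Rightarrow> 'b \<Rightarrow> 'y \<Rightarrow> 'b \<Rightarrow> 'y) \<Rightarrow> ('x \<Rightarrow> 'y) \<Rightarrow> bool" where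
  "B_morphism zX phi zY psi f \<longleftrightarrow> f zX = zY \<and>
     (\<forall>x x' b b'. psi (f x) b (f x') b' = f (phi x b x' b'))"

end

theory Submission
  imports Defs
begin

theorem proposition4p3:
  fixes addB :: "'b \<Rightarrow> 'b \<Rightarrow> 'b" and zB :: 'b
    and zX :: 'x and phi :: "'x \<Rightarrow> 'b \<Rightarrow> 'x \<Rightarrow> 'b \<Rightarrow> 'x"
    and zY :: 'y and psi :: "'y \<Rightarrow> 'b \<Rightarrow> 'y \<Rightarrow> 'b \<Rightarrow> 'y"
    and f :: "'x \<Rightarrow> 'y"
  assumes B: "unitary_magma UNIV addB zB"
    and act1: "B_action addB zB zX phi"
    and act2: "B_action addB zB zY psi"
    and f_iso: "magma_iso UNIV (\<lambda>x x'. phi x zB x' zB) zX UNIV (\<lambda>y y'. psi y zB y' zB) zY f"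
    and f_Bmor: "B_morphism zX phi zY psi f"
  shows "\<exists>g. magma_iso (sdp_carrier zB zX phi) (sdp_add addB phi) (zX, zB)
                       (sdp_carrier zB zY psi) (sdp_add addB psi) (zY, zB) g
           \<and> (\<forall>p\<in>sdp_carrier zB zX phi. fst (g p) = f (fst p))
           \<and> (\<forall>x. g (x, zB) = (f x, zB))
           \<and> (\<forall>b. g (zX, b) = (zY, b))
           \<and> (\<forall>g'. magma_iso (sdp_carrier zB zX phi) (sdp_add addB phi) (zX, zB)
                       (sdp_carrier zB zY psi) (sdp_add addB psi) (zY, zB) g'
                 \<and> (\<forall>p\<in>sdp_carrier zB zX phi. fst (g' p) = f (fst p))
                 \<and> (\<forall>x. g' (x, zB) = (f x, zB))
                 \<and> (\<forall>b. g' (zX, b) = (zY, b))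
                 \<longrightarrow> (\<forall>p\<in>sdp_carrier zB zX phi. g' p = g p))"
proof -
  have fz: "f zX = zY" and fm: "\<And>x x' b b'. psi (f x) b (f x') b' = f (phi x b x' b')"
    using f_Bmor unfolding B_morphism_def by auto
  have bij: "bij f" using f_iso unfolding magma_iso_def by auto
  hence finj: "inj f" and fsurj: "surj f" by (auto simp: bij_def)
  have a3: "\<And>b b'. phi zX b zX b' = zX" using act1 unfolding B_action_def by auto
  define g where "g = (\<lambda>p::'x \<times> 'b. (f (fst p), snd p))"
  have hom: "magma_hom (sdp_carrier zB zX phi) (sdp_add addB phi) (zX, zB)
                       (sdp_carrier zB zY psi) (sdp_add addB psi) (zY, zB) g"
    unfolding magma_hom_def g_def sdp_carrier_def sdp_add_def
    using fz fm by (auto simp flip: fz)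
  have "inj_on g (sdp_carrier zB zX phi)"
    unfolding g_def inj_on_def using finj by (auto simp: inj_eq prod_eq_iff)
  moreover have "g ` sdp_carrier zB zX phi = sdp_carrier zB zY psi"
  proof
    show "g ` sdp_carrier zB zX phi \<subseteq> sdp_carrier zB zY psi"
      using hom unfolding magma_hom_def by auto
  next
    show "sdp_carrier zB zY psi \<subseteq> g ` sdp_carrier zB zX phi"
    proof
      fix q assume q: "q \<in> sdp_carrier zB zY psi"
      obtain y b where qq: "q = (y, b)" by (cases q)
      obtain x where y: "y = f x" using fsurj by (metis surjD)
      have "f (phi x zB zX b) = f x" using q qq y fm[of x zB zX b] fz
        unfolding sdp_carrier_def by auto
      hence "phi x zB zX b = x" using finj by (simp add: inj_eq)
      hence "(x, b) \<in> sdp_carrier zB zX phi" unfolding sdp_carrier_def by simp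
      thus "q \<in> g ` sdp_carrier zB zX phi" unfolding g_def qq y by force
    qed
  qed
  ultimately have iso: "magma_iso (sdp_carrier zB zX phi) (sdp_add addB phi) (zX, zB)
                       (sdp_carrier zB zY psi) (sdp_add addB psi) (zY, zB) g"
    using hom unfolding magma_iso_def bij_betw_def by auto
  show ?thesis
  proof (intro exI[of _ g] conjI allI ballI impI iso)
    fix p show "fst (g p) = f (fst p)" by (simp add: g_def)
  next
    fix x show "g (x, zB) = (f x, zB)" by (simp add: g_def)
  next
    fix b show "g (zX, b) = (zY, b)" by (simp add: g_def fz)
  next
    fix g' p
    assume H: "magma_iso (sdp_carrier zB zX phi) (sdp_add addB phi) (zX, zB)
                       (sdp_carrier zB zY psi) (sdp_add addB psi) (zY, zB) g'
                 \<and> (\<forall>p\<in>sdp_carrier zB zX phi. fst (g' p) = f (fst p))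
                 \<and> (\<forall>x. g' (x, zB) = (f x, zB))
                 \<and> (\<forall>b. g' (zX, b) = (zY, b))"
      and p: "p \<in> sdp_carrier zB zX phi"
    obtain x b where pp: "p = (x, b)" by (cases p)
    have px: "phi x zB zX b = x" using p pp unfolding sdp_carrier_def by auto
    have c1: "(x, zB) \<in> sdp_carrier zB zX phi" using px fm
      using act1 unfolding sdp_carrier_def B_action_def by auto
    have c2: "(zX, b) \<in> sdp_carrier zB zX phi" using a3 unfolding sdp_carrier_def by auto
    have add: "sdp_add addB phi (x, zB) (zX, b) = (x, b)"
      using px B unfolding sdp_add_def unitary_magma_def by auto
    have "g' (x, b) = sdp_add addB psi (g' (x, zB)) (g' (zX, b))"
      using H c1 c2 add unfolding magma_iso_def magma_hom_def by metis
    also have "\<dots> = (psi (f x) zB zY b, addB zB b)" using H by (simp add: sdp_add_def)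
    also have "\<dots> = (f x, b)" using fm[of x zB zX b] fz px B unfolding unitary_magma_def by auto
    finally show "g' p = g p" using pp by (simp add: g_def)
  qed
qed

end
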